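(* Let $G$ be a symmetric finite discounted stochastic game. Then for every $\epsilon \geq 0$, $G$ has the $\epsilon$-revision paths property: for every joint policy $\bm{\gamma}_0 \in \bm{\Delta}$ there exists a finite sequence of joint policies $\bm{\gamma}_0, \bm{\gamma}_1, \dots, \bm{\gamma}_L \in \bm{\Delta}$ which is an $\epsilon$-revision path and satisfies $\bm{\gamma}_L \in \bm{\Delta}^{\epsilon}_{\rm eq}$.
   Context: A finite discounted stochastic game is $G = (\mathcal{N}, \mathbb{X}, \{\mathbb{U}^i\}_{i\in\mathcal{N}}, \{c^i\}_{i\in\mathcal{N}}, \{\beta^i\}_{i\in\mathcal{N}}, P, \nu_0)$, where $\mathcal{N}$ is a finite set of players, $\mathbb{X}$ a finite state set, $\mathbb{U}^i$ a finite action set for player $i$, $\textbf{U} = \times_{i} \mathbb{U}^i$ the set of joint actions, $c^i : \mathbb{X}\times\textbf{U}\to\mathbb{R}$ the stage cost of player $i$, $\beta^i \in [0,1)$ its discount factor, $P(\cdot \mid x, \textbf{u})$ a transition kernel on $\mathbb{X}$ given $\mathbb{X}\times\textbf{U}$ governing $x_{t+1}$ given $(x_t,\textbf{u}_t)$, and $\nu_0$ the initial state distribution. A stationary policy of player $i$ is a stochastic kernel $\gamma^i$ from $\mathbb{X}$ to $\mathbb{U}^i$ (player $i$ picks $u^i_t \sim \gamma^i(\cdot\mid x_t)$, independently across players given the state); $\Delta^i$ is the set of these, $\bm{\Delta} = \times_i \Delta^i$, $\bm{\Delta}^{-i} = \times_{j\neq i}\Delta^j$, and a joint policy is written $\bm{\gamma}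 = (\gamma^i, \bm{\gamma}^{-i})$. The cost of player $i$ from state $x$ is $J^i_x(\bm{\gamma}) = E^{\bm{\gamma}}\big[\sum_{t\geq 0} (\beta^i)^t c^i(x_t,\textbf{u}_t) \mid x_0 = x\big]$. For $\epsilon \ge 0$, $\gamma^{i}$ is an $\epsilon$-best-response to $\bm{\gamma}^{-i}$ if $J^i_x(\gamma^i,\bm{\gamma}^{-i}) \leq \inf_{\pi^i\in\Delta^i} J^i_x(\pi^i,\bm{\gamma}^{-i}) + \epsilon$ for all $x\in\mathbb{X}$; ${\rm BR}^i_\epsilon(\bm{\gamma}^{-i})$ denotes the set of such policies. $\bm{\gamma}$ is an $\epsilon$-equilibrium if $\gamma^i \in {\rm BR}^i_\epsilon(\bm{\gamma}^{-i})$ for every $i$; $\bm{\Delta}^\epsilon_{\rm eq}$ is the set of $\epsilon$-equilibria. The game is symmetric if $\mathbb{U}^i = \mathbb{U}^j$ and $\beta^i=\beta^j$ for all $i,j$, and for every permutation $\sigma$ of $\mathcal{N}$, every $i$, every $x$ and every joint action $\textbf{a}$: $c^i(x,\sigma(\textbf{a})) = c^{\sigma(i)}(x,\textbf{a})$ and $P(\cdot\mid x,\textbf{a}) = P(\cdot \mid x,\sigma(\textbf{a}))$, where $\sigma(\textbf{a})$ is the joint action whose $i$-th component is $a^{\sigma(i)}$. A (possibly finite) sequence of joint policies $(\bm{\gamma}_k)_{k\ge 0}$ is an $\epsilon$-revision path if for every $k$ and every player $i$, $\gamma^i_k \in {\rm BR}^i_\epsilon(\bm{\gamma}^{-i}_k)$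 implies $\gamma^i_{k+1} = \gamma^i_k$. *)

theory Defs
  imports "HOL-Analysis.Analysis"
begin

text \<open>A finite discounted stochastic game is given by: a finite type of players 'i,
  a finite type of states 'x, action sets A i (finite, nonempty) inside an ambient type 'a,
  stage costs c i x u, discount factors beta i, and a transition kernel P x u y
  (probability of next state y given state x and joint action u).
  The initial distribution does not enter any of the notions below.\<close>

definition joint_actions :: "('i \<Rightarrow> 'a set) \<Rightarrow> ('i \<Rightarrow> 'a) set" where
  "joint_actions A = {u. \<forall>i. u i \<in> A i}"

definition stochastic_game ::
  "('i::finite \<Rightarrow> 'a set) \<Rightarrow> ('i \<Rightarrow> 'x::finite \<Rightarrow> ('i \<Rightarrow> 'a) \<Rightarrow> real)
   \<Rightarrow> ('i \<Rightarrow> real) \<Rightarrow> ('x \<Rightarrow> ('i \<Rightarrow> 'a) \<Rightarrow> 'x \<Rightarrow> real) \<Rightarrow> bool" where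
  "stochastic_game A c beta P \<longleftrightarrow>
     (\<forall>i. finite (A i) \<and> A i \<noteq> {}) \<and>
     (\<forall>i. 0 \<le> beta i \<and> beta i < 1) \<and>
     (\<forall>x. \<forall>u\<in>joint_actions A. (\<forall>y. 0 \<le> P x u y) \<and> (\<Sum>y\<in>UNIV. P x u y) = 1)"

definition is_policy :: "'a set \<Rightarrow> ('x \<Rightarrow> 'a \<Rightarrow> real) \<Rightarrow> bool" where
  "is_policy U g \<longleftrightarrow>
     (\<forall>x. (\<forall>a. 0 \<le> g x a) \<and> (\<forall>a. a \<notin> U \<longrightarrow> g x a = 0) \<and> (\<Sum>a\<in>U. g x a) = 1)"

definition joint_policies :: "('i \<Rightarrow> 'a set) \<Rightarrow> ('i \<Rightarrow> 'x \<Rightarrow> 'a \<Rightarrow> real) set" where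
  "joint_policies A = {\<gamma>. \<forall>i. is_policy (A i) (\<gamma> i)}"

definition joint_prob :: "('i::finite \<Rightarrow> 'x \<Rightarrow> 'a \<Rightarrow> real) \<Rightarrow> 'x \<Rightarrow> ('i \<Rightarrow> 'a) \<Rightarrow> real" where
  "joint_prob \<gamma> x u = (\<Prod>j\<in>UNIV. \<gamma> j x (u j))"

definition exp_cost where
  "exp_cost A c \<gamma> i x = (\<Sum>u\<in>joint_actions A. joint_prob \<gamma> x u * c i x u)"

definition trans_pol where
  "trans_pol A P \<gamma> x y = (\<Sum>u\<in>joint_actions A. joint_prob \<gamma> x u * P x u y)"

fun state_dist ::
  "('i::finite \<Rightarrow> 'a set) \<Rightarrow> ('x::finite \<Rightarrow> ('i \<Rightarrow> 'a) \<Rightarrow> 'x \<Rightarrow> real)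
   \<Rightarrow> ('i \<Rightarrow> 'x \<Rightarrow> 'a \<Rightarrow> real) \<Rightarrow> nat \<Rightarrow> 'x \<Rightarrow> 'x \<Rightarrow> real" where
  "state_dist A P \<gamma> 0 x y = (if x = y then 1 else 0)"
| "state_dist A P \<gamma> (Suc t) x y = (\<Sum>z\<in>UNIV. state_dist A P \<gamma> t x z * trans_pol A P \<gamma> z y)"

definition cost_J where
  "cost_J A c beta P i \<gamma> x =
     (\<Sum>t. beta i ^ t * (\<Sum>y\<in>UNIV. state_dist A P \<gamma> t x y * exp_cost A c \<gamma> i y))"

definition best_response where
  "best_response A c beta P eps i \<gamma> g \<longleftrightarrow>
     is_policy (A i) g \<and>
     (\<forall>x. cost_J A c beta P i (\<gamma>(i := g)) x
            \<le> (INF \<pi>\<in>{\<pi>. is_policy (A i) \<pi>}. cost_J A c beta P i (\<gamma>(i := \<pi>)) x) + eps)"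

definition is_equilibrium where
  "is_equilibrium A c beta P eps \<gamma> \<longleftrightarrow>
     \<gamma> \<in> joint_policies A \<and> (\<forall>i. best_response A c beta P eps i \<gamma> (\<gamma> i))"

definition revision_path where
  "revision_path A c beta P eps \<gamma>s L \<longleftrightarrow>
     (\<forall>k\<le>L. \<gamma>s k \<in> joint_policies A) \<and>
     (\<forall>k<L. \<forall>i. best_response A c beta P eps i (\<gamma>s k) (\<gamma>s k i)
                 \<longrightarrow> \<gamma>s (Suc k) i = \<gamma>s k i)"

text \<open>Symmetric game; sigma(a) is the joint action with i-th component a (sigma i), i.e. a o sigma.\<close>
definition symmetric_game where
  "symmetric_game A c beta P \<longleftrightarrow>
     (\<forall>i j. A i = A j \<and> beta i = beta j) \<and>
     (\<forall>\<sigma>. bij \<sigma> \<longrightarrow> (\<forall>i x a. a \<in> joint_actions A \<longrightarrow>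
         c i x (a \<circ> \<sigma>) = c (\<sigma> i) x a \<and> P x a = P x (a \<circ> \<sigma>)))"

end

theory Submission
  imports Defs
begin

lemma bw_fin:
  fixes xs :: "nat \<Rightarrow> nat \<Rightarrow> real"
  assumes "\<forall>k i. i < N \<longrightarrow> 0 \<le> xs k i \<and> xs k i \<le> 1"
  shows "\<exists>r z. strict_mono r \<and> (\<forall>i<N. 0 \<le> z i \<and> z i \<le> 1 \<and> (\<lambda>k. xs (r k) i) \<longlonglongrightarrow> z i)"
  using assms
proof (induction N)
  case 0
  then show ?case by (auto intro: strict_mono_id)
next
  case (Suc N)
  then obtain r z where r: "strict_mono r" and z: "\<forall>i<N. 0 \<le> z i \<and> z i \<le> 1 \<and> (\<lambda>k. xs (r k) i) \<longlonglongrightarrow> z i"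
    by auto
  have "seq_compact {0..(1::real)}" by (simp add: compact_imp_seq_compact)
  moreover have "\<forall>k. xs (r k) N \<in> {0..1}" using Suc.prems by auto
  ultimately obtain l r' where l: "l \<in> {0..1}" "strict_mono r'" "((\<lambda>k. xs (r k) N) \<circ> r') \<longlonglongrightarrow> l"
    by (rule seq_compactE)
  show ?case
  proof (intro exI conjI allI impI)
    show "strict_mono (r \<circ> r')" using r l(2) by (simp add: strict_mono_o)
    fix i assume i: "i < Suc N"
    let ?z = "z(N := l)"
    show "0 \<le> ?z i" "?z i \<le> 1" using z l(1) i by (auto simp: less_Suc_eq)
    show "(\<lambda>k. xs ((r \<circ> r') k) i) \<longlonglongrightarrow> ?z i"
    proof (cases "i = N")
      case True then show ?thesis using l(3) by (simp add: o_def)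
    next
      case False
      then have "i < N" using i by auto
      then have "(\<lambda>k. xs (r k) i) \<longlonglongrightarrow> z i" using z by auto
      from LIMSEQ_subseq_LIMSEQ[OF this l(2)] show ?thesis using False by (simp add: o_def)
    qed
  qed
qed


lemma brouwer_nat:
  fixes f :: "(nat \<Rightarrow> real) \<Rightarrow> (nat \<Rightarrow> real)" and N :: nat
  defines "C \<equiv> {x. \<forall>i. (i < N \<longrightarrow> 0 \<le> x i \<and> x i \<le> 1) \<and> (N \<le> i \<longrightarrow> x i = 0)}"
  assumes into: "\<And>x. x \<in> C \<Longrightarrow> f x \<in> C"
    and cont: "\<And>xs z. (\<And>k. xs k \<in> C) \<Longrightarrow> z \<in> C \<Longrightarrow> (\<And>i. (\<lambda>k. xs k i) \<longlonglongrightarrow> z i)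
                  \<Longrightarrow> (\<And>i. (\<lambda>k. f (xs k) i) \<longlonglongrightarrow> f z i)"
  shows "\<exists>z\<in>C. f z = z"
proof -
  define label :: "(nat \<Rightarrow> real) \<Rightarrow> nat \<Rightarrow> nat" where
    "label x i = (if x i = 1 then 1 else if x i \<le> f x i then 0 else 1)" for x i
  define pt :: "nat \<Rightarrow> (nat \<Rightarrow> nat) \<Rightarrow> nat \<Rightarrow> real" where
    "pt p q = (\<lambda>j. if j < N then real (q j) / real p else 0)" for p q
  have ptC: "pt p q \<in> C" if "p > 0" "\<forall>j<N. q j \<le> p" for p q
    using that by (auto simp: pt_def C_def)
  have fC: "0 \<le> f x i \<and> f x i \<le> 1" if "x \<in> C" "i < N" for x i
    using into[OF that(1)] that(2) unfolding C_def by auto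
  have lab0: "x i \<le> f x i" if "label x i = 0" for x i
    using that unfolding label_def by (auto split: if_splits)
  have lab1: "f x i \<le> x i" if "label x i = 1" "x \<in> C" "i < N" for x i
    using that fC[OF that(2,3)] unfolding label_def by (auto split: if_splits)
  have step: "\<exists>q. (\<forall>i<N. q i < Suc k) \<and> (\<forall>i<N. \<exists>u v. (\<forall>j<N. q j \<le> u j \<and> u j \<le> q j + 1) \<and>
        (\<forall>j<N. q j \<le> v j \<and> v j \<le> q j + 1) \<and>
        pt (Suc k) u i \<le> f (pt (Suc k) u) i \<and> f (pt (Suc k) v) i \<le> pt (Suc k) v i)" for k
  proof -
    let ?p = "Suc k"
    let ?l = "\<lambda>q. label (pt ?p q)"
    have h1: "\<forall>x. (\<forall>i<N. x i \<le> ?p) \<longrightarrow> (\<forall>i<N. ?l x i = 0 \<or> ?l x i = 1)"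
      by (auto simp: label_def)
    have h2: "\<forall>x. (\<forall>i<N. x i \<le> ?p) \<longrightarrow> (\<forall>i<N. x i = 0 \<longrightarrow> ?l x i = 0)"
    proof (intro allI impI)
      fix x i assume a: "\<forall>i<N. x i \<le> ?p" "i < N" "x i = 0"
      have "pt ?p x \<in> C" using ptC a by auto
      then show "?l x i = 0" using fC[of "pt ?p x" i] a by (auto simp: label_def pt_def)
    qed
    have h3: "\<forall>x. (\<forall>i<N. x i \<le> ?p) \<longrightarrow> (\<forall>i<N. x i = ?p \<longrightarrow> ?l x i = 1)"
      by (auto simp: label_def pt_def)
    obtain q where q1: "\<forall>i<N. q i < ?p" and
      q2: "\<forall>i<N. \<exists>r s. (\<forall>j<N. q j \<le> r j \<and> r j \<le> q j + 1) \<and> (\<forall>j<N. q j \<le> s j \<and> s j \<le> q j + 1) \<and> ?l r i \<noteq> ?l s i"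
      using kuhn_lemma[of ?p N ?l] h1 h2 h3 by blast
    show ?thesis
    proof (rule exI[of _ q], intro conjI)
      show "\<forall>i<N. q i < ?p" using q1 by auto
      show "\<forall>i<N. \<exists>u v. (\<forall>j<N. q j \<le> u j \<and> u j \<le> q j + 1) \<and> (\<forall>j<N. q j \<le> v j \<and> v j \<le> q j + 1) \<and>
        pt ?p u i \<le> f (pt ?p u) i \<and> f (pt ?p v) i \<le> pt ?p v i"
      proof (intro allI impI)
      fix i assume i: "i < N"
      obtain r s where rs: "\<forall>j<N. q j \<le> r j \<and> r j \<le> q j + 1" "\<forall>j<N. q j \<le> s j \<and> s j \<le> q j + 1" "?l r i \<noteq> ?l s i"
        using q2 i by blast
      have rC: "pt ?p r \<in> C" using rs(1) q1 by (intro ptC) (auto, metis Suc_leI add.commute le_trans plus_1_eq_Suc)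
      have sC: "pt ?p s \<in> C" using rs(2) q1 by (intro ptC) (auto, metis Suc_leI add.commute le_trans plus_1_eq_Suc)
      have lr: "?l r i \<le> 1" "?l s i \<le> 1" by (auto simp: label_def)
      show "\<exists>u v. (\<forall>j<N. q j \<le> u j \<and> u j \<le> q j + 1) \<and> (\<forall>j<N. q j \<le> v j \<and> v j \<le> q j + 1) \<and>
        pt ?p u i \<le> f (pt ?p u) i \<and> f (pt ?p v) i \<le> pt ?p v i"
      proof (cases "?l r i = 0")
        case True
        then have "?l s i = 1" using rs(3) lr by auto
        then show ?thesis using rs True lab0 lab1[OF _ sC i] by blast
      next
        case False
        then have "?l r i = 1" "?l s i = 0" using rs(3) lr by auto
        then show ?thesis using rs lab0 lab1[OF _ rC i] by blast
      qed
      qed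
    qed
  qed
  then obtain Q where Q: "\<And>k. \<forall>i<N. Q k i < Suc k" and
    QU: "\<And>k. \<forall>i<N. \<exists>u v. (\<forall>j<N. Q k j \<le> u j \<and> u j \<le> Q k j + 1) \<and>
        (\<forall>j<N. Q k j \<le> v j \<and> v j \<le> Q k j + 1) \<and>
        pt (Suc k) u i \<le> f (pt (Suc k) u) i \<and> f (pt (Suc k) v) i \<le> pt (Suc k) v i"
    by metis
  then obtain U V where UV: "\<And>k i. i < N \<Longrightarrow> (\<forall>j<N. Q k j \<le> U k i j \<and> U k i j \<le> Q k j + 1) \<and>
        (\<forall>j<N. Q k j \<le> V k i j \<and> V k i j \<le> Q k j + 1) \<and>
        pt (Suc k) (U k i) i \<le> f (pt (Suc k) (U k i)) i \<and> f (pt (Suc k) (V k i)) i \<le> pt (Suc k) (V k i) i"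
    by metis
  define xs where "xs k = pt (Suc k) (Q k)" for k
  have xsC: "xs k \<in> C" for k unfolding xs_def using Q[of k] by (intro ptC) (auto simp: less_imp_le)
  then have "\<forall>k i. i < N \<longrightarrow> 0 \<le> xs k i \<and> xs k i \<le> 1" by (auto simp: C_def)
  from bw_fin[OF this] obtain r z where r: "strict_mono r" and
    z: "\<forall>i<N. 0 \<le> z i \<and> z i \<le> 1 \<and> (\<lambda>k. xs (r k) i) \<longlonglongrightarrow> z i" by blast
  define z' where "z' i = (if i < N then z i else 0)" for i
  have z'C: "z' \<in> C" using z by (auto simp: C_def z'_def)
  have near: "(\<lambda>k. pt (Suc (r k)) (W k) j) \<longlonglongrightarrow> z' j"
    if W: "\<And>k. \<forall>j<N. Q (r k) j \<le> W k j \<and> W k j \<le> Q (r k) j + 1" for W j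
  proof (cases "j < N")
    case False
    then show ?thesis by (simp add: pt_def z'_def)
  next
    case True
    have d0: "(\<lambda>k. 1 / real (Suc (r k))) \<longlonglongrightarrow> 0"
    proof -
      have "(\<lambda>k. 1 / real (Suc k)) \<longlonglongrightarrow> 0" by (rule LIMSEQ_Suc[OF lim_inverse_n'])
      from LIMSEQ_subseq_LIMSEQ[OF this r] show ?thesis by (simp add: o_def)
    qed
    have "(\<lambda>k. pt (Suc (r k)) (W k) j - xs (r k) j) \<longlonglongrightarrow> 0"
    proof (rule tendsto_sandwich[of "\<lambda>k. 0" _ _ "\<lambda>k. 1 / real (Suc (r k))"])
      show "\<forall>\<^sub>F n in sequentially. 0 \<le> pt (Suc (r n)) (W n) j - xs (r n) j"
        using W True by (auto simp: pt_def xs_def divide_right_mono)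
      show "\<forall>\<^sub>F n in sequentially. pt (Suc (r n)) (W n) j - xs (r n) j \<le> 1 / real (Suc (r n))"
      proof (intro always_eventually allI)
        fix n
        have "real (W n j) \<le> real (Q (r n) j) + 1" using W[of n] True by auto
        then show "pt (Suc (r n)) (W n) j - xs (r n) j \<le> 1 / real (Suc (r n))"
          using True by (auto simp: pt_def xs_def diff_divide_distrib[symmetric] divide_right_mono)
      qed
    qed (rule tendsto_const, rule d0)
    from tendsto_add[OF this, of "\<lambda>k. xs (r k) j" "z j"] z True
    show ?thesis by (simp add: z'_def)
  qed
  have "f z' i = z' i" for i
  proof (cases "i < N")
    case False
    then show ?thesis using into[OF z'C] z'C by (auto simp: C_def)
  next
    case True
    have Uc: "\<And>k. \<forall>j<N. Q (r k) j \<le> U (r k) i j \<and> U (r k) i j \<le> Q (r k) j + 1"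
      using UV[OF True] by blast
    have Vc: "\<And>k. \<forall>j<N. Q (r k) j \<le> V (r k) i j \<and> V (r k) i j \<le> Q (r k) j + 1"
      using UV[OF True] by blast
    have UC: "pt (Suc (r k)) (U (r k) i) \<in> C" for k
      using Uc[of k] Q[of "r k"] by (intro ptC) (auto, metis Suc_leI add.commute le_trans plus_1_eq_Suc)
    have VC: "pt (Suc (r k)) (V (r k) i) \<in> C" for k
      using Vc[of k] Q[of "r k"] by (intro ptC) (auto, metis Suc_leI add.commute le_trans plus_1_eq_Suc)
    have lu: "(\<lambda>k. pt (Suc (r k)) (U (r k) i) j) \<longlonglongrightarrow> z' j" for j using near[OF Uc] .
    have lv: "(\<lambda>k. pt (Suc (r k)) (V (r k) i) j) \<longlonglongrightarrow> z' j" for j using near[OF Vc] .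
    have fu: "(\<lambda>k. f (pt (Suc (r k)) (U (r k) i)) i) \<longlonglongrightarrow> f z' i"
      using cont[of "\<lambda>k. pt (Suc (r k)) (U (r k) i)" z', OF UC z'C lu] .
    have fv: "(\<lambda>k. f (pt (Suc (r k)) (V (r k) i)) i) \<longlonglongrightarrow> f z' i"
      using cont[of "\<lambda>k. pt (Suc (r k)) (V (r k) i)" z', OF VC z'C lv] .
    have "z' i \<le> f z' i"
      by (rule LIMSEQ_le[OF lu fu]) (use UV[OF True] in blast)
    moreover have "f z' i \<le> z' i"
      by (rule LIMSEQ_le[OF fv lv]) (use UV[OF True] in blast)
    ultimately show ?thesis by auto
  qed
  then show ?thesis using z'C by blast
qed


lemma series_dom:
  fixes g :: "nat \<Rightarrow> nat \<Rightarrow> real"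
  assumes b: "\<And>k t. \<bar>g k t\<bar> \<le> b t" and sb: "summable b" and lim: "\<And>t. (\<lambda>k. g k t) \<longlonglongrightarrow> h t"
  shows "(\<lambda>k. suminf (g k)) \<longlonglongrightarrow> suminf h"
proof -
  have hb: "\<bar>h t\<bar> \<le> b t" for t
  proof (rule LIMSEQ_le_const2)
    show "(\<lambda>k. \<bar>g k t\<bar>) \<longlonglongrightarrow> \<bar>h t\<bar>" by (rule tendsto_rabs[OF lim])
  qed (use b in auto)
  have sh: "summable h"
    by (rule summable_comparison_test[OF _ sb]) (use hb in auto)
  have uc: "uniform_limit UNIV (\<lambda>n k. \<Sum>t<n. g k t) (\<lambda>k. suminf (\<lambda>t. g k t)) sequentially"
    by (rule Weierstrass_m_test[where M=b]) (use b sb in auto)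
  show ?thesis
  proof (rule swap_uniform_limit'[where f="\<lambda>n k. \<Sum>t<n. g k t" and g="\<lambda>n. \<Sum>t<n. h t" and S=UNIV, OF _ _ uc])
    show "\<forall>\<^sub>F n in sequentially. ((\<lambda>k. \<Sum>t<n. g k t) \<longlongrightarrow> (\<Sum>t<n. h t)) sequentially"
      by (intro always_eventually allI tendsto_sum lim)
    show "(\<lambda>n. \<Sum>t<n. h t) \<longlonglongrightarrow> suminf h" using summable_LIMSEQ[OF sh] by simp
  qed auto
qed

locale sgame =
  fixes A :: "'i::finite \<Rightarrow> 'a set"
    and c :: "'i \<Rightarrow> 'x::finite \<Rightarrow> ('i \<Rightarrow> 'a) \<Rightarrow> real"
    and beta :: "'i \<Rightarrow> real"
    and P :: "'x \<Rightarrow> ('i \<Rightarrow> 'a) \<Rightarrow> 'x \<Rightarrow> real"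
  assumes sg: "stochastic_game A c beta P"
begin

abbreviation "JA \<equiv> joint_actions A"
abbreviation "JP \<equiv> joint_policies A"
abbreviation "J \<equiv> cost_J A c beta P"
abbreviation "E \<equiv> exp_cost A c"
abbreviation "T \<equiv> trans_pol A P"
abbreviation "SD \<equiv> state_dist A P"

lemma finA: "finite (A i)" and neA: "A i \<noteq> {}" and beta0: "0 \<le> beta i" and beta1: "beta i < 1"
  using sg by (auto simp: stochastic_game_def)

lemma P_nonneg: "u \<in> JA \<Longrightarrow> 0 \<le> P x u y" and P_sum: "u \<in> JA \<Longrightarrow> (\<Sum>y\<in>UNIV. P x u y) = 1"
  using sg by (auto simp: stochastic_game_def)

lemma JA_PiE: "JA = PiE UNIV A"
  by (auto simp: joint_actions_def PiE_def Pi_def extensional_def)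

lemma finJA: "finite JA"
  unfolding JA_PiE by (intro finite_PiE finA) auto

lemma pol_nonneg: "\<gamma> \<in> JP \<Longrightarrow> 0 \<le> \<gamma> i x a"
  by (auto simp: joint_policies_def is_policy_def)

lemma pol_out: "\<gamma> \<in> JP \<Longrightarrow> a \<notin> A i \<Longrightarrow> \<gamma> i x a = 0"
  by (auto simp: joint_policies_def is_policy_def)

lemma pol_sum: "\<gamma> \<in> JP \<Longrightarrow> (\<Sum>a\<in>A i. \<gamma> i x a) = 1"
  by (auto simp: joint_policies_def is_policy_def)

lemma pol_le1: "\<gamma> \<in> JP \<Longrightarrow> \<gamma> i x a \<le> 1"
proof (cases "a \<in> A i")
  case True
  assume g: "\<gamma> \<in> JP"
  have "\<gamma> i x a \<le> (\<Sum>b\<in>A i. \<gamma> i x b)"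
    by (rule member_le_sum) (use True finA pol_nonneg[OF g] in auto)
  then show ?thesis using pol_sum[OF g] by simp
qed (simp add: pol_out)

lemma jp_nonneg: "\<gamma> \<in> JP \<Longrightarrow> 0 \<le> joint_prob \<gamma> x u"
  unfolding joint_prob_def by (intro prod_nonneg) (auto simp: pol_nonneg)

lemma jp_sum: "\<gamma> \<in> JP \<Longrightarrow> (\<Sum>u\<in>JA. joint_prob \<gamma> x u) = 1"
proof -
  assume g: "\<gamma> \<in> JP"
  have "(\<Prod>j\<in>UNIV. \<Sum>a\<in>A j. \<gamma> j x a) = (\<Sum>u\<in>PiE UNIV A. \<Prod>j\<in>UNIV. \<gamma> j x (u j))"
    by (rule prod_sum_PiE) (auto simp: finA)
  then show ?thesis using pol_sum[OF g] by (simp add: JA_PiE joint_prob_def)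
qed

lemma T_nonneg: "\<gamma> \<in> JP \<Longrightarrow> 0 \<le> T \<gamma> x y"
  unfolding trans_pol_def by (intro sum_nonneg mult_nonneg_nonneg jp_nonneg P_nonneg) auto

lemma T_sum: "\<gamma> \<in> JP \<Longrightarrow> (\<Sum>y\<in>UNIV. T \<gamma> x y) = 1"
proof -
  assume g: "\<gamma> \<in> JP"
  have "(\<Sum>y\<in>UNIV. T \<gamma> x y) = (\<Sum>u\<in>JA. joint_prob \<gamma> x u * (\<Sum>y\<in>UNIV. P x u y))"
    unfolding trans_pol_def by (subst sum.swap) (simp add: sum_distrib_left mult.assoc)
  also have "\<dots> = (\<Sum>u\<in>JA. joint_prob \<gamma> x u)" by (intro sum.cong) (auto simp: P_sum)
  finally show ?thesis using jp_sum[OF g] by simp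
qed

lemma SD_nonneg: "\<gamma> \<in> JP \<Longrightarrow> 0 \<le> SD \<gamma> t x y"
  by (induction t arbitrary: y) (auto intro!: sum_nonneg mult_nonneg_nonneg T_nonneg)

lemma SD_sum: "\<gamma> \<in> JP \<Longrightarrow> (\<Sum>y\<in>UNIV. SD \<gamma> t x y) = 1"
proof (induction t)
  case 0 then show ?case by simp
next
  case (Suc t)
  have "(\<Sum>y\<in>UNIV. SD \<gamma> (Suc t) x y) = (\<Sum>z\<in>UNIV. SD \<gamma> t x z * (\<Sum>y\<in>UNIV. T \<gamma> z y))"
    by (simp, subst sum.swap) (simp add: sum_distrib_left)
  also have "\<dots> = (\<Sum>z\<in>UNIV. SD \<gamma> t x z)" using T_sum[OF Suc.prems] by simp
  finally show ?case using Suc by simp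
qed

end

context sgame begin
definition "Mc = (\<Sum>i\<in>UNIV. \<Sum>x\<in>UNIV. \<Sum>u\<in>JA. \<bar>c i x u\<bar>)"

lemma c_bound: "u \<in> JA \<Longrightarrow> \<bar>c i x u\<bar> \<le> Mc"
proof -
  assume u: "u \<in> JA"
  have "\<bar>c i x u\<bar> \<le> (\<Sum>u\<in>JA. \<bar>c i x u\<bar>)" by (rule member_le_sum) (use u finJA in auto)
  also have "\<dots> \<le> (\<Sum>x\<in>UNIV. \<Sum>u\<in>JA. \<bar>c i x u\<bar>)"
    by (rule member_le_sum[where f="\<lambda>x. \<Sum>u\<in>JA. \<bar>c i x u\<bar>"]) (auto intro: sum_nonneg)
  also have "\<dots> \<le> Mc" unfolding Mc_def
    by (rule member_le_sum[where f="\<lambda>i. \<Sum>x\<in>UNIV. \<Sum>u\<in>JA. \<bar>c i x u\<bar>"]) (auto intro!: sum_nonneg)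
  finally show ?thesis .
qed

lemma E_bound: "\<gamma> \<in> JP \<Longrightarrow> \<bar>E \<gamma> i x\<bar> \<le> Mc"
proof -
  assume g: "\<gamma> \<in> JP"
  have "\<bar>E \<gamma> i x\<bar> \<le> (\<Sum>u\<in>JA. \<bar>joint_prob \<gamma> x u * c i x u\<bar>)"
    unfolding exp_cost_def by (rule sum_abs)
  also have "\<dots> \<le> (\<Sum>u\<in>JA. joint_prob \<gamma> x u * Mc)"
    by (intro sum_mono) (auto simp: abs_mult jp_nonneg[OF g] c_bound intro!: mult_left_mono)
  also have "\<dots> = Mc" using jp_sum[OF g] by (simp add: sum_distrib_right[symmetric])
  finally show ?thesis .
qed

definition "vt \<gamma> i t x = (\<Sum>y\<in>UNIV. SD \<gamma> t x y * E \<gamma> i y)"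

lemma vt_bound: "\<gamma> \<in> JP \<Longrightarrow> \<bar>vt \<gamma> i t x\<bar> \<le> Mc"
proof -
  assume g: "\<gamma> \<in> JP"
  have "\<bar>vt \<gamma> i t x\<bar> \<le> (\<Sum>y\<in>UNIV. \<bar>SD \<gamma> t x y * E \<gamma> i y\<bar>)"
    unfolding vt_def by (rule sum_abs)
  also have "\<dots> \<le> (\<Sum>y\<in>UNIV. SD \<gamma> t x y * Mc)"
    by (intro sum_mono) (auto simp: abs_mult SD_nonneg[OF g] E_bound[OF g] intro!: mult_left_mono)
  also have "\<dots> = Mc" using SD_sum[OF g] by (simp add: sum_distrib_right[symmetric])
  finally show ?thesis .
qed

lemma term_bound: "\<gamma> \<in> JP \<Longrightarrow> \<bar>beta i ^ t * vt \<gamma> i t x\<bar> \<le> beta i ^ t * Mc"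
  using vt_bound[of \<gamma> i t x] beta0[of i] by (simp add: abs_mult mult_left_mono)

lemma summable_geo: "summable (\<lambda>t. beta i ^ t * Mc)"
  using beta0[of i] beta1[of i] by (intro summable_mult2 summable_geometric) auto

lemma summable_J: "\<gamma> \<in> JP \<Longrightarrow> summable (\<lambda>t. beta i ^ t * vt \<gamma> i t x)"
  by (rule summable_comparison_test[OF _ summable_geo[of i]]) (use term_bound in auto)

end

context sgame begin
lemma delta_sum: "(\<Sum>z\<in>(UNIV::'x set). (if x = z then 1 else 0) * f z) = (f x::real)"
proof -
  have "(\<Sum>z\<in>(UNIV::'x set). (if x = z then 1 else 0) * f z) = (\<Sum>z\<in>UNIV. if x = z then f z else 0)"
    by (rule sum.cong) auto
  then show ?thesis by simp
qed

lemma delta_sum2: "(\<Sum>z\<in>(UNIV::'x set). f z * (if z = y then 1 else 0)) = (f y::real)"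
proof -
  have "(\<Sum>z\<in>(UNIV::'x set). f z * (if z = y then 1 else 0)) = (\<Sum>z\<in>UNIV. if y = z then f z else 0)"
    by (rule sum.cong) auto
  then show ?thesis by simp
qed

lemma J_vt: "J i \<gamma> x = (\<Sum>t. beta i ^ t * vt \<gamma> i t x)"
  unfolding cost_J_def vt_def by simp

lemma SD_left: "SD \<gamma> (Suc t) x y = (\<Sum>z\<in>UNIV. T \<gamma> x z * SD \<gamma> t z y)"
proof (induction t arbitrary: x y)
  case 0
  then show ?case by (simp add: delta_sum delta_sum2)
next
  case (Suc t)
  have "SD \<gamma> (Suc (Suc t)) x y = (\<Sum>w\<in>UNIV. (\<Sum>z\<in>UNIV. T \<gamma> x z * SD \<gamma> t z w) * T \<gamma> w y)"
    using Suc by simp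
  also have "\<dots> = (\<Sum>z\<in>UNIV. T \<gamma> x z * (\<Sum>w\<in>UNIV. SD \<gamma> t z w * T \<gamma> w y))"
    unfolding sum_distrib_left sum_distrib_right by (subst sum.swap) (simp add: mult.assoc)
  finally show ?case by simp
qed

lemma vt_Suc: "vt \<gamma> i (Suc t) x = (\<Sum>z\<in>UNIV. T \<gamma> x z * vt \<gamma> i t z)"
  unfolding vt_def SD_left sum_distrib_left sum_distrib_right by (subst sum.swap) (simp add: mult.assoc)

lemma vt_0: "vt \<gamma> i 0 x = E \<gamma> i x"
  unfolding vt_def by (simp add: delta_sum)

end

context sgame begin
lemma bellman0: "\<gamma> \<in> JP \<Longrightarrow> J i \<gamma> x = E \<gamma> i x + beta i * (\<Sum>z\<in>UNIV. T \<gamma> x z * J i \<gamma> z)"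
proof -
  assume g: "\<gamma> \<in> JP"
  have s: "summable (\<lambda>t. beta i ^ t * vt \<gamma> i t z)" for z using summable_J[OF g] .
  have "J i \<gamma> x = (\<Sum>t. beta i ^ Suc t * vt \<gamma> i (Suc t) x) + beta i ^ 0 * vt \<gamma> i 0 x"
    unfolding J_vt by (subst suminf_split_head[OF s[of x]]) simp
  also have "(\<Sum>t. beta i ^ Suc t * vt \<gamma> i (Suc t) x) = (\<Sum>t. beta i * (\<Sum>z\<in>UNIV. T \<gamma> x z * (beta i ^ t * vt \<gamma> i t z)))"
  proof (rule suminf_cong)
    fix t
    show "beta i ^ Suc t * vt \<gamma> i (Suc t) x = beta i * (\<Sum>z\<in>UNIV. T \<gamma> x z * (beta i ^ t * vt \<gamma> i t z))"
      unfolding vt_Suc sum_distrib_left by (intro sum.cong refl) (simp add: power_Suc mult_ac)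
  qed
  also have "\<dots> = beta i * (\<Sum>t. \<Sum>z\<in>UNIV. T \<gamma> x z * (beta i ^ t * vt \<gamma> i t z))"
    by (rule suminf_mult) (rule summable_sum, rule summable_mult, rule s)
  also have "(\<Sum>t. \<Sum>z\<in>UNIV. T \<gamma> x z * (beta i ^ t * vt \<gamma> i t z)) = (\<Sum>z\<in>UNIV. \<Sum>t. T \<gamma> x z * (beta i ^ t * vt \<gamma> i t z))"
    by (rule suminf_sum) (rule summable_mult, rule s)
  also have "\<dots> = (\<Sum>z\<in>UNIV. T \<gamma> x z * J i \<gamma> z)"
    unfolding J_vt by (rule sum.cong[OF refl], rule suminf_mult, rule s)
  finally show ?thesis by (simp add: vt_0)
qed

lemma bellman: "\<gamma> \<in> JP \<Longrightarrow>
   J i \<gamma> x = (\<Sum>u\<in>JA. joint_prob \<gamma> x u * (c i x u + beta i * (\<Sum>y\<in>UNIV. P x u y * J i \<gamma> y)))"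
proof -
  assume g: "\<gamma> \<in> JP"
  have sw: "(\<Sum>y\<in>UNIV. T \<gamma> x y * J i \<gamma> y) = (\<Sum>u\<in>JA. joint_prob \<gamma> x u * (\<Sum>y\<in>UNIV. P x u y * J i \<gamma> y))"
    unfolding trans_pol_def sum_distrib_left sum_distrib_right by (subst sum.swap) (simp add: mult.assoc)
  have "(\<Sum>u\<in>JA. joint_prob \<gamma> x u * (c i x u + beta i * (\<Sum>y\<in>UNIV. P x u y * J i \<gamma> y)))
     = E \<gamma> i x + beta i * (\<Sum>y\<in>UNIV. T \<gamma> x y * J i \<gamma> y)"
  proof -
    have "(\<Sum>u\<in>JA. joint_prob \<gamma> x u * (c i x u + beta i * (\<Sum>y\<in>UNIV. P x u y * J i \<gamma> y)))
      = (\<Sum>u\<in>JA. joint_prob \<gamma> x u * c i x u + beta i * (joint_prob \<gamma> x u * (\<Sum>y\<in>UNIV. P x u y * J i \<gamma> y)))"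
      by (rule sum.cong[OF refl]) (simp add: distrib_left mult.left_commute)
    then show ?thesis unfolding exp_cost_def sw sum.distrib by (simp add: sum_distrib_left)
  qed
  then show ?thesis using bellman0[OF g, where i=i and x=x] by linarith
qed

end

context sgame begin

definition "dl a = (\<lambda>(_::'x) b. if b = a then 1 else (0::real))"
definition "Qf \<gamma> i V x a = (\<Sum>u\<in>JA. joint_prob (\<gamma>(i := dl a)) x u * (c i x u + beta i * (\<Sum>y\<in>UNIV. P x u y * V y)))"

lemma jp_upd: "joint_prob (\<gamma>(i:=\<pi>)) x u = \<pi> x (u i) * (\<Prod>j\<in>UNIV-{i}. \<gamma> j x (u j))"
proof -
  have "joint_prob (\<gamma>(i:=\<pi>)) x u = (\<gamma>(i:=\<pi>)) i x (u i) * (\<Prod>j\<in>UNIV-{i}. (\<gamma>(i:=\<pi>)) j x (u j))"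
    unfolding joint_prob_def by (rule prod.remove) auto
  also have "(\<Prod>j\<in>UNIV-{i}. (\<gamma>(i:=\<pi>)) j x (u j)) = (\<Prod>j\<in>UNIV-{i}. \<gamma> j x (u j))"
    by (rule prod.cong) auto
  finally show ?thesis by (simp only: fun_upd_same)
qed

lemma mix: "u \<in> JA \<Longrightarrow> (\<Sum>a\<in>A i. \<pi> x a * joint_prob (\<gamma>(i:=dl a)) x u) = joint_prob (\<gamma>(i:=\<pi>)) x u"
proof -
  assume u: "u \<in> JA"
  then have ui: "u i \<in> A i" by (auto simp: joint_actions_def)
  let ?R = "\<Prod>j\<in>UNIV-{i}. \<gamma> j x (u j)"
  have "(\<Sum>a\<in>A i. \<pi> x a * joint_prob (\<gamma>(i:=dl a)) x u) = (\<Sum>a\<in>A i. if a = u i then \<pi> x a * ?R else 0)"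
    unfolding jp_upd by (rule sum.cong) (auto simp: dl_def)
  also have "\<dots> = \<pi> x (u i) * ?R" using ui finA[of i] by (simp add: sum.delta')
  finally show ?thesis by (simp add: jp_upd)
qed

lemma mixQ: "(\<Sum>a\<in>A i. \<pi> x a * Qf \<gamma> i V x a) =
   (\<Sum>u\<in>JA. joint_prob (\<gamma>(i:=\<pi>)) x u * (c i x u + beta i * (\<Sum>y\<in>UNIV. P x u y * V y)))"
proof -
  let ?K = "\<lambda>u. c i x u + beta i * (\<Sum>y\<in>UNIV. P x u y * V y)"
  have "(\<Sum>a\<in>A i. \<pi> x a * Qf \<gamma> i V x a) = (\<Sum>a\<in>A i. \<Sum>u\<in>JA. \<pi> x a * joint_prob (\<gamma>(i := dl a)) x u * ?K u)"
    unfolding Qf_def sum_distrib_left by (simp add: mult.assoc)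
  also have "\<dots> = (\<Sum>u\<in>JA. \<Sum>a\<in>A i. \<pi> x a * joint_prob (\<gamma>(i := dl a)) x u * ?K u)"
    by (rule sum.swap)
  also have "\<dots> = (\<Sum>u\<in>JA. (\<Sum>a\<in>A i. \<pi> x a * joint_prob (\<gamma>(i := dl a)) x u) * ?K u)"
    by (simp add: sum_distrib_right)
  also have "\<dots> = (\<Sum>u\<in>JA. joint_prob (\<gamma>(i:=\<pi>)) x u * ?K u)"
    by (rule sum.cong[OF refl]) (simp add: mix)
  finally show ?thesis .
qed

lemma upd_JP: "\<gamma> \<in> JP \<Longrightarrow> is_policy (A i) \<pi> \<Longrightarrow> \<gamma>(i:=\<pi>) \<in> JP"
  by (auto simp: joint_policies_def)

lemma J_mix: "\<gamma> \<in> JP \<Longrightarrow> (\<Sum>a\<in>A i. \<gamma> i x a * Qf \<gamma> i (J i \<gamma>) x a) = J i \<gamma> x"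
  using mixQ[where \<pi>="\<gamma> i" and V="J i \<gamma>" and \<gamma>=\<gamma> and i=i and x=x] bellman[of \<gamma> i x] by simp

lemma br:
  assumes g: "\<gamma> \<in> JP" and opt: "\<And>x a. a \<in> A i \<Longrightarrow> J i \<gamma> x \<le> Qf \<gamma> i (J i \<gamma>) x a"
    and pi: "is_policy (A i) \<pi>"
  shows "J i \<gamma> x \<le> J i (\<gamma>(i:=\<pi>)) x"
proof -
  define V where "V = J i \<gamma>"
  define W where "W = J i (\<gamma>(i:=\<pi>))"
  have g': "\<gamma>(i:=\<pi>) \<in> JP" by (rule upd_JP[OF g pi])
  have pin: "0 \<le> \<pi> x a" for x a using pi by (auto simp: is_policy_def)
  have pis: "(\<Sum>a\<in>A i. \<pi> x a) = 1" for x using pi by (auto simp: is_policy_def)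
  define D where "D = Max (range (\<lambda>y. V y - W y))"
  have key: "V x - W x \<le> beta i * D" for x
  proof -
    have "V x = (\<Sum>a\<in>A i. \<pi> x a * V x)" using pis[of x] by (simp add: sum_distrib_right[symmetric])
    also have "\<dots> \<le> (\<Sum>a\<in>A i. \<pi> x a * Qf \<gamma> i V x a)"
      by (rule sum_mono) (use opt pin in \<open>auto simp: V_def intro!: mult_left_mono\<close>)
    also have "\<dots> = (\<Sum>u\<in>JA. joint_prob (\<gamma>(i:=\<pi>)) x u * (c i x u + beta i * (\<Sum>y\<in>UNIV. P x u y * V y)))"
      by (rule mixQ)
    finally have v: "V x \<le> \<dots>" .
    have w: "W x = (\<Sum>u\<in>JA. joint_prob (\<gamma>(i:=\<pi>)) x u * (c i x u + beta i * (\<Sum>y\<in>UNIV. P x u y * W y)))"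
      unfolding W_def by (rule bellman[OF g'])
    have "V x - W x \<le> (\<Sum>u\<in>JA. joint_prob (\<gamma>(i:=\<pi>)) x u * (beta i * (\<Sum>y\<in>UNIV. P x u y * (V y - W y))))"
    proof -
      have "V x - W x \<le> (\<Sum>u\<in>JA. joint_prob (\<gamma>(i:=\<pi>)) x u * (c i x u + beta i * (\<Sum>y\<in>UNIV. P x u y * V y)))
          - (\<Sum>u\<in>JA. joint_prob (\<gamma>(i:=\<pi>)) x u * (c i x u + beta i * (\<Sum>y\<in>UNIV. P x u y * W y)))"
        using v w by linarith
      also have "\<dots> = (\<Sum>u\<in>JA. joint_prob (\<gamma>(i:=\<pi>)) x u * (c i x u + beta i * (\<Sum>y\<in>UNIV. P x u y * V y))
          - joint_prob (\<gamma>(i:=\<pi>)) x u * (c i x u + beta i * (\<Sum>y\<in>UNIV. P x u y * W y)))"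
        by (rule sum_subtractf[symmetric])
      also have "\<dots> = (\<Sum>u\<in>JA. joint_prob (\<gamma>(i:=\<pi>)) x u * (beta i * (\<Sum>y\<in>UNIV. P x u y * (V y - W y))))"
      proof (rule sum.cong[OF refl])
        fix u
        have S: "(\<Sum>y\<in>UNIV. P x u y * (V y - W y)) = (\<Sum>y\<in>UNIV. P x u y * V y) - (\<Sum>y\<in>UNIV. P x u y * W y)"
          by (simp add: right_diff_distrib sum_subtractf)
        show "joint_prob (\<gamma>(i:=\<pi>)) x u * (c i x u + beta i * (\<Sum>y\<in>UNIV. P x u y * V y))
          - joint_prob (\<gamma>(i:=\<pi>)) x u * (c i x u + beta i * (\<Sum>y\<in>UNIV. P x u y * W y))
          = joint_prob (\<gamma>(i:=\<pi>)) x u * (beta i * (\<Sum>y\<in>UNIV. P x u y * (V y - W y)))"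
          unfolding S by (simp add: algebra_simps)
      qed
      finally show ?thesis .
    qed
    also have "\<dots> \<le> (\<Sum>u\<in>JA. joint_prob (\<gamma>(i:=\<pi>)) x u * (beta i * D))"
    proof (rule sum_mono)
      fix u assume u: "u \<in> JA"
      have "(\<Sum>y\<in>UNIV. P x u y * (V y - W y)) \<le> (\<Sum>y\<in>UNIV. P x u y * D)"
        by (rule sum_mono, rule mult_left_mono) (auto simp: D_def P_nonneg[OF u])
      also have "\<dots> = D" using P_sum[OF u, of x] by (simp add: sum_distrib_right[symmetric])
      finally have "beta i * (\<Sum>y\<in>UNIV. P x u y * (V y - W y)) \<le> beta i * D"
        using beta0[of i] by (rule mult_left_mono)
      then show "joint_prob (\<gamma>(i:=\<pi>)) x u * (beta i * (\<Sum>y\<in>UNIV. P x u y * (V y - W y))) \<le> joint_prob (\<gamma>(i:=\<pi>)) x u * (beta i * D)"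
        by (rule mult_left_mono) (rule jp_nonneg[OF g'])
    qed
    also have "\<dots> = beta i * D" using jp_sum[OF g', of x] by (simp add: sum_distrib_right[symmetric])
    finally show ?thesis .
  qed
  have "D \<in> range (\<lambda>y. V y - W y)" unfolding D_def by (rule Max_in) auto
  then obtain y0 where "D = V y0 - W y0" by blast
  then have "D \<le> beta i * D" using key[of y0] by simp
  then have "D \<le> 0"
  proof -
    assume DD: "D \<le> beta i * D"
    show "D \<le> 0"
    proof (rule ccontr)
      assume "\<not> D \<le> 0"
      then have "beta i * D < 1 * D" using beta1[of i] by (intro mult_strict_right_mono) auto
      then show False using DD by simp
    qed
  qed
  moreover have "V x - W x \<le> D" unfolding D_def by (rule Max_ge) auto
  ultimately show ?thesis by (simp add: V_def W_def)
qed

lemma eq_of_opt: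
  assumes g: "\<gamma> \<in> JP" and opt: "\<And>i x a. a \<in> A i \<Longrightarrow> J i \<gamma> x \<le> Qf \<gamma> i (J i \<gamma>) x a"
    and eps: "eps \<ge> 0"
  shows "is_equilibrium A c beta P eps \<gamma>"
proof -
  have "best_response A c beta P eps i \<gamma> (\<gamma> i)" for i
  proof -
    have pol: "is_policy (A i) (\<gamma> i)" using g by (simp add: joint_policies_def)
    then have ne: "{\<pi> :: 'x \<Rightarrow> 'a \<Rightarrow> real. is_policy (A i) \<pi>} \<noteq> {}" by blast
    have "J i \<gamma> x \<le> (INF \<pi>\<in>{\<pi>. is_policy (A i) \<pi>}. J i (\<gamma>(i := \<pi>)) x)" for x
    proof (rule cINF_greatest[OF ne])
      fix \<pi> :: "'x \<Rightarrow> 'a \<Rightarrow> real" assume "\<pi> \<in> {\<pi>. is_policy (A i) \<pi>}"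
      then have "is_policy (A i) \<pi>" by simp
      then show "J i \<gamma> x \<le> J i (\<gamma>(i := \<pi>)) x" by (intro br[where i=i and \<pi>=\<pi> and x=x and \<gamma>=\<gamma>] g opt)
    qed
    then have "J i (\<gamma>(i := \<gamma> i)) x \<le> (INF \<pi>\<in>{\<pi>. is_policy (A i) \<pi>}. J i (\<gamma>(i := \<pi>)) x) + eps" for x
      using eps by (simp only: fun_upd_triv) (rule add_increasing2)
    then show ?thesis using pol unfolding best_response_def by blast
  qed
  then show ?thesis using g unfolding is_equilibrium_def by blast
qed

definition "gn \<gamma> i x a = max 0 (J i \<gamma> x - Qf \<gamma> i (J i \<gamma>) x a)"
definition "nash \<gamma> i x a = (if a \<in> A i then (\<gamma> i x a + gn \<gamma> i x a) / (1 + (\<Sum>b\<in>A i. gn \<gamma> i x b)) else 0)"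

lemma gn_nonneg: "0 \<le> gn \<gamma> i x a" by (simp add: gn_def)
lemma G_nonneg: "0 \<le> (\<Sum>b\<in>A i. gn \<gamma> i x b)" by (intro sum_nonneg gn_nonneg)

lemma nash_JP: "\<gamma> \<in> JP \<Longrightarrow> nash \<gamma> \<in> JP"
proof -
  assume g: "\<gamma> \<in> JP"
  have "is_policy (A i) (nash \<gamma> i)" for i
    unfolding is_policy_def
  proof (intro allI conjI impI)
    fix x a
    have "0 < 1 + (\<Sum>b\<in>A i. gn \<gamma> i x b)" using G_nonneg[where i=i and \<gamma>=\<gamma> and x=x] by linarith
    then show "0 \<le> nash \<gamma> i x a" unfolding nash_def using pol_nonneg[OF g] gn_nonneg by auto
    show "a \<notin> A i \<Longrightarrow> nash \<gamma> i x a = 0" by (simp add: nash_def)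
    have "(\<Sum>a\<in>A i. nash \<gamma> i x a) = (\<Sum>a\<in>A i. (\<gamma> i x a + gn \<gamma> i x a) / (1 + (\<Sum>b\<in>A i. gn \<gamma> i x b)))"
      by (rule sum.cong) (auto simp: nash_def)
    also have "\<dots> = (\<Sum>a\<in>A i. \<gamma> i x a + gn \<gamma> i x a) / (1 + (\<Sum>b\<in>A i. gn \<gamma> i x b))"
      by (simp add: sum_divide_distrib)
    also have "\<dots> = 1" using pol_sum[OF g, of i x] G_nonneg[where i=i and \<gamma>=\<gamma> and x=x] by (simp add: sum.distrib)
    finally show "(\<Sum>a\<in>A i. nash \<gamma> i x a) = 1" .
  qed
  then show ?thesis by (simp add: joint_policies_def)
qed

lemma nash_fix:
  assumes g: "\<gamma> \<in> JP" and fx: "nash \<gamma> = \<gamma>" and a: "a \<in> A i"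
  shows "J i \<gamma> x \<le> Qf \<gamma> i (J i \<gamma>) x a"
proof -
  define G where "G = (\<Sum>b\<in>A i. gn \<gamma> i x b)"
  have G0: "0 \<le> G" unfolding G_def by (rule G_nonneg)
  have rel: "\<gamma> i x b * G = gn \<gamma> i x b" if b: "b \<in> A i" for b
  proof -
    have "\<gamma> i x b = (\<gamma> i x b + gn \<gamma> i x b) / (1 + G)"
      using fun_cong[OF fun_cong[OF fun_cong[OF fx, of i], of x], of b] b by (simp add: nash_def G_def)
    moreover have "1 + G \<noteq> 0" using G0 by linarith
    ultimately have "\<gamma> i x b * (1 + G) = \<gamma> i x b + gn \<gamma> i x b"
      by (simp add: field_simps)
    then show ?thesis by (simp add: algebra_simps)
  qed
  have "G = 0"
  proof (rule ccontr)
    assume "G \<noteq> 0"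
    then have Gp: "G > 0" using G0 by simp
    have le: "\<gamma> i x b * (Qf \<gamma> i (J i \<gamma>) x b - J i \<gamma> x) \<le> 0" if b: "b \<in> A i" for b
    proof (cases "\<gamma> i x b = 0")
      case False
      then have "\<gamma> i x b > 0" using pol_nonneg[OF g, of i x b] by simp
      then have "gn \<gamma> i x b > 0" using rel[OF b] Gp mult_pos_pos[of "\<gamma> i x b" G] by simp
      then have "Qf \<gamma> i (J i \<gamma>) x b < J i \<gamma> x" by (simp add: gn_def)
      then show ?thesis using \<open>\<gamma> i x b > 0\<close> by (simp add: mult_pos_neg less_imp_le)
    qed simp
    have "\<exists>b\<in>A i. \<gamma> i x b \<noteq> 0"
    proof (rule ccontr)
      assume "\<not> (\<exists>b\<in>A i. \<gamma> i x b \<noteq> 0)"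
      then have "(\<Sum>b\<in>A i. \<gamma> i x b) = 0" by simp
      then show False using pol_sum[OF g, of i x] by simp
    qed
    then obtain b where b: "b \<in> A i" "\<gamma> i x b \<noteq> 0" by blast
    then have bpos: "\<gamma> i x b > 0" using pol_nonneg[OF g, of i x b] by simp
    then have "gn \<gamma> i x b > 0" using rel[OF b(1)] Gp mult_pos_pos[of "\<gamma> i x b" G] by simp
    then have "Qf \<gamma> i (J i \<gamma>) x b < J i \<gamma> x" by (simp add: gn_def)
    then have lt: "\<gamma> i x b * (Qf \<gamma> i (J i \<gamma>) x b - J i \<gamma> x) < 0" using bpos by (simp add: mult_pos_neg)
    have "(\<Sum>b\<in>A i. \<gamma> i x b * (Qf \<gamma> i (J i \<gamma>) x b - J i \<gamma> x)) < (\<Sum>b\<in>A i. 0)"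
      by (rule sum_strict_mono_ex1) (use finA le b lt in auto)
    moreover have "(\<Sum>b\<in>A i. \<gamma> i x b * (Qf \<gamma> i (J i \<gamma>) x b - J i \<gamma> x)) = 0"
      using J_mix[OF g, of i x] pol_sum[OF g, of i x]
      by (simp add: right_diff_distrib sum_subtractf sum_distrib_right[symmetric])
    ultimately show False by simp
  qed
  then have "gn \<gamma> i x a = 0"
    using sum_nonneg_eq_0_iff[of "A i" "gn \<gamma> i x"] finA[of i] gn_nonneg a unfolding G_def by blast
  then show ?thesis by (simp add: gn_def)
qed

end

context sgame begin

definition conv :: "(nat \<Rightarrow> 'i \<Rightarrow> 'x \<Rightarrow> 'a \<Rightarrow> real) \<Rightarrow> ('i \<Rightarrow> 'x \<Rightarrow> 'a \<Rightarrow> real) \<Rightarrow> bool" where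
  "conv \<gamma>s \<gamma> \<longleftrightarrow> (\<forall>i x a. (\<lambda>k. \<gamma>s k i x a) \<longlonglongrightarrow> \<gamma> i x a)"

lemma jp_tendsto: "conv \<gamma>s \<gamma> \<Longrightarrow> (\<lambda>k. joint_prob (\<gamma>s k) x u) \<longlonglongrightarrow> joint_prob \<gamma> x u"
  unfolding joint_prob_def conv_def by (intro tendsto_prod) auto

lemma E_tendsto: "conv \<gamma>s \<gamma> \<Longrightarrow> (\<lambda>k. E (\<gamma>s k) i x) \<longlonglongrightarrow> E \<gamma> i x"
  unfolding exp_cost_def by (intro tendsto_sum tendsto_mult jp_tendsto tendsto_const)

lemma T_tendsto: "conv \<gamma>s \<gamma> \<Longrightarrow> (\<lambda>k. T (\<gamma>s k) x y) \<longlonglongrightarrow> T \<gamma> x y"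
  unfolding trans_pol_def by (intro tendsto_sum tendsto_mult jp_tendsto tendsto_const)

lemma SD_tendsto: "conv \<gamma>s \<gamma> \<Longrightarrow> (\<lambda>k. SD (\<gamma>s k) t x y) \<longlonglongrightarrow> SD \<gamma> t x y"
proof (induction t arbitrary: y)
  case 0 then show ?case by simp
next
  case (Suc t)
  show ?case unfolding state_dist.simps
    by (intro tendsto_sum tendsto_mult Suc T_tendsto)
qed

lemma vt_tendsto: "conv \<gamma>s \<gamma> \<Longrightarrow> (\<lambda>k. vt (\<gamma>s k) i t x) \<longlonglongrightarrow> vt \<gamma> i t x"
  unfolding vt_def by (intro tendsto_sum tendsto_mult SD_tendsto E_tendsto)

lemma J_tendsto:
  assumes cv: "conv \<gamma>s \<gamma>" and jp: "\<And>k. \<gamma>s k \<in> JP"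
  shows "(\<lambda>k. J i (\<gamma>s k) x) \<longlonglongrightarrow> J i \<gamma> x"
  unfolding J_vt
proof (rule series_dom[where b="\<lambda>t. beta i ^ t * Mc"])
  show "\<bar>beta i ^ t * vt (\<gamma>s k) i t x\<bar> \<le> beta i ^ t * Mc" for k t by (rule term_bound[OF jp])
  show "summable (\<lambda>t. beta i ^ t * Mc)" by (rule summable_geo)
  show "(\<lambda>k. beta i ^ t * vt (\<gamma>s k) i t x) \<longlonglongrightarrow> beta i ^ t * vt \<gamma> i t x" for t
    by (intro tendsto_mult tendsto_const vt_tendsto cv)
qed

lemma upd_conv: "conv \<gamma>s \<gamma> \<Longrightarrow> conv (\<lambda>k. (\<gamma>s k)(i:=\<pi>)) (\<gamma>(i:=\<pi>))"
  unfolding conv_def by auto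

lemma Qf_tendsto:
  assumes cv: "conv \<gamma>s \<gamma>" and jp: "\<And>k. \<gamma>s k \<in> JP"
  shows "(\<lambda>k. Qf (\<gamma>s k) i (J i (\<gamma>s k)) x a) \<longlonglongrightarrow> Qf \<gamma> i (J i \<gamma>) x a"
  unfolding Qf_def
  by (intro tendsto_sum tendsto_mult tendsto_add tendsto_const jp_tendsto upd_conv cv J_tendsto jp)

lemma gn_tendsto:
  assumes cv: "conv \<gamma>s \<gamma>" and jp: "\<And>k. \<gamma>s k \<in> JP"
  shows "(\<lambda>k. gn (\<gamma>s k) i x a) \<longlonglongrightarrow> gn \<gamma> i x a"
  unfolding gn_def
  by (intro tendsto_max tendsto_const tendsto_diff J_tendsto Qf_tendsto cv jp)

lemma nash_tendsto:
  assumes cv: "conv \<gamma>s \<gamma>" and jp: "\<And>k. \<gamma>s k \<in> JP"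
  shows "(\<lambda>k. nash (\<gamma>s k) i x a) \<longlonglongrightarrow> nash \<gamma> i x a"
proof (cases "a \<in> A i")
  case True
  have "1 + (\<Sum>b\<in>A i. gn \<gamma> i x b) \<noteq> 0" using G_nonneg[where \<gamma>=\<gamma> and i=i and x=x] by linarith
  moreover have "(\<lambda>k. \<gamma>s k i x a) \<longlonglongrightarrow> \<gamma> i x a" using cv by (simp add: conv_def)
  ultimately show ?thesis using True unfolding nash_def
    by (simp, intro tendsto_divide tendsto_add tendsto_const tendsto_sum gn_tendsto cv jp) auto
next
  case False
  then show ?thesis by (simp add: nash_def)
qed

end

context sgame begin

lemma nash_exists: "\<exists>\<gamma>\<in>JP. nash \<gamma> = \<gamma>"
proof -
  define Ds where "Ds = (SIGMA i:(UNIV::'i set). (UNIV :: 'x set) \<times> A i)"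
  have finD: "finite Ds" unfolding Ds_def by (intro finite_SigmaI finite_cartesian_product finA) auto
  define N where "N = card Ds"
  obtain e where e: "bij_betw e {0..<N} Ds" using ex_bij_betw_nat_finite[OF finD] N_def by blast
  define en where "en = inv_into {0..<N} e"
  have en_in: "en p < N" if "p \<in> Ds" for p
    using that e unfolding en_def by (metis atLeastLessThan_iff bij_betw_def inv_into_into)
  have e_en: "e (en p) = p" if "p \<in> Ds" for p
    using that e unfolding en_def by (simp add: bij_betw_def f_inv_into_f)
  have e_in: "e n \<in> Ds" if "n < N" for n
    using that e unfolding bij_betw_def by auto
  define toV :: "('i \<Rightarrow> 'x \<Rightarrow> 'a \<Rightarrow> real) \<Rightarrow> nat \<Rightarrow> real" where
    "toV \<gamma> n = (if n < N then \<gamma> (fst (e n)) (fst (snd (e n))) (snd (snd (e n))) else 0)" for \<gamma> n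
  define rho :: "'i \<Rightarrow> ('a \<Rightarrow> real) \<Rightarrow> 'a \<Rightarrow> real" where
    "rho i v a = (v a + max 0 (1 - (\<Sum>b\<in>A i. v b)) / real (card (A i))) / max (\<Sum>b\<in>A i. v b) 1" for i v a
  define ofV :: "(nat \<Rightarrow> real) \<Rightarrow> 'i \<Rightarrow> 'x \<Rightarrow> 'a \<Rightarrow> real" where
    "ofV y i x a = (if a \<in> A i then rho i (\<lambda>b. y (en (i, x, b))) a else 0)" for y i x a
  define C :: "(nat \<Rightarrow> real) set" where "C = {y. \<forall>n. (n < N \<longrightarrow> 0 \<le> y n \<and> y n \<le> 1) \<and> (N \<le> n \<longrightarrow> y n = 0)}"
  define F where "F y = toV (nash (ofV y))" for y
  have cardpos: "real (card (A i)) > 0" for i using finA[of i] neA[of i] by (simp add: card_gt_0_iff)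
  have rho_nonneg: "0 \<le> rho i v a" if "0 \<le> v a" for i v a
    unfolding rho_def using that cardpos[of i] by (intro divide_nonneg_pos add_nonneg_nonneg divide_nonneg_pos) auto
  have rho_sum: "(\<Sum>a\<in>A i. rho i v a) = 1" for i v
  proof -
    let ?s = "\<Sum>b\<in>A i. v b"
    have "(\<Sum>a\<in>A i. rho i v a) = (\<Sum>a\<in>A i. v a + max 0 (1 - ?s) / real (card (A i))) / max ?s 1"
      unfolding rho_def by (simp add: sum_divide_distrib)
    also have "(\<Sum>a\<in>A i. v a + max 0 (1 - ?s) / real (card (A i))) = ?s + max 0 (1 - ?s)"
      using cardpos[of i] by (simp add: sum.distrib)
    also have "?s + max 0 (1 - ?s) = max ?s 1" by auto
    finally show ?thesis by simp
  qed
  have rho_id: "rho i v a = v a" if "(\<Sum>b\<in>A i. v b) = 1" for i v a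
    unfolding rho_def using that by simp
  have rho_cong: "rho i v a = rho i w a" if "\<And>b. b \<in> A i \<Longrightarrow> v b = w b" "a \<in> A i" for i v w a
  proof -
    have "(\<Sum>b\<in>A i. v b) = (\<Sum>b\<in>A i. w b)" using that by (intro sum.cong) auto
    then show ?thesis unfolding rho_def using that by simp
  qed
  have DsI: "(i, x, b) \<in> Ds" if "b \<in> A i" for i x b using that by (simp add: Ds_def)
  have ofV_JP: "ofV y \<in> JP" if "y \<in> C" for y
  proof -
    have "is_policy (A i) (ofV y i)" for i
      unfolding is_policy_def
    proof (intro allI conjI impI)
      fix x a
      show "0 \<le> ofV y i x a" unfolding ofV_def using that en_in[OF DsI, of a i x]
        by (auto simp: C_def intro!: rho_nonneg)
      show "a \<notin> A i \<Longrightarrow> ofV y i x a = 0" by (simp add: ofV_def)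
      have "(\<Sum>a\<in>A i. ofV y i x a) = (\<Sum>a\<in>A i. rho i (\<lambda>b. y (en (i, x, b))) a)"
        by (rule sum.cong) (auto simp: ofV_def)
      then show "(\<Sum>a\<in>A i. ofV y i x a) = 1" using rho_sum by simp
    qed
    then show ?thesis by (simp add: joint_policies_def)
  qed
  have toV_C: "toV \<gamma> \<in> C" if "\<gamma> \<in> JP" for \<gamma>
    unfolding C_def toV_def using pol_nonneg[OF that] pol_le1[OF that] by auto
  have ofV_toV: "ofV (toV \<gamma>) = \<gamma>" if g: "\<gamma> \<in> JP" for \<gamma>
  proof (intro ext)
    fix i x a
    show "ofV (toV \<gamma>) i x a = \<gamma> i x a"
    proof (cases "a \<in> A i")
      case True
      have "rho i (\<lambda>b. toV \<gamma> (en (i, x, b))) a = rho i (\<gamma> i x) a"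
      proof (rule rho_cong[OF _ True])
        fix b assume b: "b \<in> A i"
        show "toV \<gamma> (en (i, x, b)) = \<gamma> i x b"
          unfolding toV_def using en_in[OF DsI[OF b]] e_en[OF DsI[OF b]] by simp
      qed
      also have "\<dots> = \<gamma> i x a" by (rule rho_id) (rule pol_sum[OF g])
      finally show ?thesis using True by (simp add: ofV_def)
    next
      case False
      then show ?thesis by (simp add: ofV_def pol_out[OF g])
    qed
  qed
  have FC: "F y \<in> C" if "y \<in> C" for y
    unfolding F_def by (intro toV_C nash_JP ofV_JP that)
  have Fcont: "(\<lambda>k. F (ys k) n) \<longlonglongrightarrow> F z n"
    if ys: "\<And>k. ys k \<in> C" and z: "z \<in> C" and lim: "\<And>n. (\<lambda>k. ys k n) \<longlonglongrightarrow> z n" for ys z n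
  proof -
    have cv: "conv (\<lambda>k. ofV (ys k)) (ofV z)"
      unfolding conv_def
    proof (intro allI)
      fix i x a
      show "(\<lambda>k. ofV (ys k) i x a) \<longlonglongrightarrow> ofV z i x a"
      proof (cases "a \<in> A i")
        case True
        have "max (\<Sum>b\<in>A i. z (en (i, x, b))) 1 \<noteq> 0" by linarith
        then show ?thesis using True unfolding ofV_def rho_def
          by (simp, intro tendsto_divide tendsto_add tendsto_max tendsto_const tendsto_diff tendsto_sum lim) (use cardpos[of i] in auto)
      next
        case False
        then show ?thesis by (simp add: ofV_def)
      qed
    qed
    have jp: "\<And>k. ofV (ys k) \<in> JP" using ofV_JP ys by auto
    show ?thesis
    proof (cases "n < N")
      case True
      then show ?thesis unfolding F_def toV_def using nash_tendsto[OF cv jp] by simp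
    next
      case False
      then show ?thesis unfolding F_def toV_def by simp
    qed
  qed
  obtain z where z: "z \<in> C" "F z = z"
    using brouwer_nat[of N F, folded C_def] FC Fcont by blast
  define \<gamma> where "\<gamma> = nash (ofV z)"
  have gJP: "\<gamma> \<in> JP" unfolding \<gamma>_def by (intro nash_JP ofV_JP z)
  have "toV \<gamma> = z" using z(2) by (simp add: F_def \<gamma>_def)
  then have "ofV z = \<gamma>" using ofV_toV[OF gJP] by simp
  then have "nash \<gamma> = \<gamma>" by (simp add: \<gamma>_def)
  then show ?thesis using gJP by blast
qed

lemma equilibrium_exists: "eps \<ge> 0 \<Longrightarrow> \<exists>\<gamma>. is_equilibrium A c beta P eps \<gamma>"
  using nash_exists nash_fix eq_of_opt by blast

end

context sgame begin

context
  assumes sym: "symmetric_game A c beta P"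
begin

lemma A_eq: "A i = A j" and beta_eq: "beta i = beta j"
  using sym by (auto simp: symmetric_game_def)

lemma c_perm: "bij \<sigma> \<Longrightarrow> u \<in> JA \<Longrightarrow> c i x (u \<circ> \<sigma>) = c (\<sigma> i) x u"
  using sym by (auto simp: symmetric_game_def)

lemma P_perm: "bij \<sigma> \<Longrightarrow> u \<in> JA \<Longrightarrow> P x (u \<circ> \<sigma>) = P x u"
  using sym by (auto simp: symmetric_game_def)

lemma JA_perm: "bij \<sigma> \<Longrightarrow> bij_betw (\<lambda>w. w \<circ> \<sigma>) JA JA"
proof -
  assume b: "bij \<sigma>"
  let ?iv = "inv \<sigma>"
  have b2: "bij ?iv" using b by (simp add: bij_imp_bij_inv)
  show ?thesis
  proof (rule bij_betw_byWitness[where f'="\<lambda>w. w \<circ> ?iv"])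
    show "\<forall>a\<in>JA. a \<circ> \<sigma> \<circ> ?iv = a" using b by (auto simp: bij_def surj_iff o_assoc[symmetric])
    show "\<forall>a'\<in>JA. a' \<circ> ?iv \<circ> \<sigma> = a'" using b by (auto simp: bij_def inv_o_cancel o_assoc[symmetric] comp_assoc)
    have "w \<circ> f \<in> JA" if "w \<in> JA" for w and f :: "'i \<Rightarrow> 'i"
    proof -
      have "w (f k) \<in> A k" for k
      proof -
        have "w (f k) \<in> A (f k)" using that by (simp add: joint_actions_def)
        then show ?thesis using A_eq[of "f k" k] by simp
      qed
      then show ?thesis by (simp add: joint_actions_def)
    qed
    then show "(\<lambda>w. w \<circ> \<sigma>) ` JA \<subseteq> JA" "(\<lambda>w. w \<circ> ?iv) ` JA \<subseteq> JA" by auto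
  qed
qed

lemma jp_perm: "bij \<sigma> \<Longrightarrow> joint_prob (\<gamma> \<circ> \<sigma>) x (w \<circ> \<sigma>) = joint_prob \<gamma> x w"
proof -
  assume b: "bij \<sigma>"
  have r: "\<sigma> ` UNIV = UNIV" using b by (simp add: bij_is_surj)
  have "joint_prob \<gamma> x w = (\<Prod>k\<in>\<sigma> ` UNIV. \<gamma> k x (w k))"
    unfolding r by (simp add: joint_prob_def)
  also have "\<dots> = (\<Prod>j\<in>UNIV. \<gamma> (\<sigma> j) x (w (\<sigma> j)))"
    by (subst prod.reindex[OF bij_is_inj[OF b]]) (simp add: o_def)
  finally show ?thesis by (simp add: joint_prob_def)
qed

lemma E_perm: "bij \<sigma> \<Longrightarrow> E (\<gamma> \<circ> \<sigma>) i x = E \<gamma> (\<sigma> i) x"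
proof -
  assume b: "bij \<sigma>"
  have "E (\<gamma> \<circ> \<sigma>) i x = (\<Sum>w\<in>JA. joint_prob (\<gamma> \<circ> \<sigma>) x (w \<circ> \<sigma>) * c i x (w \<circ> \<sigma>))"
    unfolding exp_cost_def by (rule sum.reindex_bij_betw[OF JA_perm[OF b], symmetric])
  also have "\<dots> = E \<gamma> (\<sigma> i) x"
    unfolding exp_cost_def by (rule sum.cong[OF refl]) (simp add: jp_perm[OF b] c_perm[OF b])
  finally show ?thesis .
qed

lemma T_perm: "bij \<sigma> \<Longrightarrow> T (\<gamma> \<circ> \<sigma>) x y = T \<gamma> x y"
proof -
  assume b: "bij \<sigma>"
  have "T (\<gamma> \<circ> \<sigma>) x y = (\<Sum>w\<in>JA. joint_prob (\<gamma> \<circ> \<sigma>) x (w \<circ> \<sigma>) * P x (w \<circ> \<sigma>) y)"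
    unfolding trans_pol_def by (rule sum.reindex_bij_betw[OF JA_perm[OF b], symmetric])
  also have "\<dots> = T \<gamma> x y"
    unfolding trans_pol_def by (rule sum.cong[OF refl]) (simp add: jp_perm[OF b] P_perm[OF b])
  finally show ?thesis .
qed

lemma SD_perm: "bij \<sigma> \<Longrightarrow> SD (\<gamma> \<circ> \<sigma>) t x y = SD \<gamma> t x y"
  by (induction t arbitrary: y) (simp_all add: T_perm)

lemma J_perm: "bij \<sigma> \<Longrightarrow> J i (\<gamma> \<circ> \<sigma>) x = J (\<sigma> i) \<gamma> x"
  unfolding cost_J_def by (simp add: SD_perm E_perm beta_eq[of i "\<sigma> i"])

lemma J_swap:
  assumes eq: "\<gamma> i = \<gamma> j"
  shows "J j (\<gamma>(j:=\<pi>)) x = J i (\<gamma>(i:=\<pi>)) x"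
proof -
  define sw where "sw k = (if k = i then j else if k = j then i else k)" for k
  have "sw \<circ> sw = id"
  proof (rule ext)
    fix k show "(sw \<circ> sw) k = id k" by (simp add: sw_def)
  qed
  then have b: "bij sw" using o_bij by blast
  have "(\<gamma>(j:=\<pi>)) \<circ> sw = \<gamma>(i:=\<pi>)" using eq by (auto simp: sw_def)
  then have "J i (\<gamma>(i:=\<pi>)) x = J i ((\<gamma>(j:=\<pi>)) \<circ> sw) x" by simp
  also have "\<dots> = J (sw i) (\<gamma>(j:=\<pi>)) x" by (rule J_perm[OF b])
  finally show ?thesis by (simp add: sw_def)
qed

lemma sat_eq:
  assumes eq: "\<gamma> i = \<gamma> j"
  shows "best_response A c beta P eps i \<gamma> (\<gamma> i) \<longleftrightarrow> best_response A c beta P eps j \<gamma> (\<gamma> j)"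
proof -
  have s: "\<And>\<pi> x. J j (\<gamma>(j:=\<pi>)) x = J i (\<gamma>(i:=\<pi>)) x" using J_swap[OF eq] .
  have t: "J j (\<gamma>(j := \<gamma> j)) x = J i (\<gamma>(i := \<gamma> i)) x" for x using s[of "\<gamma> j" x] eq by simp
  show ?thesis unfolding best_response_def t s using eq A_eq[of i j] by simp
qed

lemma path:
  assumes eps: "eps \<ge> 0"
  shows "\<gamma>0 \<in> JP \<Longrightarrow> \<exists>\<gamma>s L. \<gamma>s 0 = \<gamma>0 \<and> revision_path A c beta P eps \<gamma>s L \<and> is_equilibrium A c beta P eps (\<gamma>s L)"
proof (induction "card (range \<gamma>0)" arbitrary: \<gamma>0 rule: less_induct)
  case less
  define sat where "sat i = best_response A c beta P eps i \<gamma>0 (\<gamma>0 i)" for i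
  show ?case
  proof (cases "\<forall>i. sat i")
    case True
    show ?thesis
      by (rule exI[of _ "\<lambda>_. \<gamma>0"], rule exI[of _ 0])
         (use True less.prems in \<open>auto simp: revision_path_def is_equilibrium_def sat_def\<close>)
  next
    case False
    then obtain u where u: "\<not> sat u" by blast
    show ?thesis
    proof (cases "\<exists>s. sat s")
      case False
      obtain e where e: "is_equilibrium A c beta P eps e" using equilibrium_exists[OF eps] by blast
      then have eJP: "e \<in> JP" by (simp add: is_equilibrium_def)
      let ?gs = "\<lambda>k::nat. if k = 0 then \<gamma>0 else e"
      show ?thesis
      proof (rule exI[of _ ?gs], rule exI[of _ 1], intro conjI)
        show "?gs 0 = \<gamma>0" by simp
        show "revision_path A c beta P eps ?gs 1"
          unfolding revision_path_def using False less.prems eJP by (auto simp: sat_def)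
        show "is_equilibrium A c beta P eps (?gs 1)" using e by simp
      qed
    next
      case True
      then obtain s where s: "sat s" by blast
      define \<gamma>1 where "\<gamma>1 i = (if sat i then \<gamma>0 i else \<gamma>0 s)" for i
      have ps: "is_policy (A i) (\<gamma>0 i)" for i using less.prems by (simp add: joint_policies_def)
      have "is_policy (A i) (\<gamma>1 i)" for i
        using ps[of i] ps[of s] A_eq[of s i] by (simp add: \<gamma>1_def)
      then have g1: "\<gamma>1 \<in> JP" by (simp add: joint_policies_def)
      have sub: "range \<gamma>1 \<subseteq> range \<gamma>0" by (auto simp: \<gamma>1_def)
      have notin: "\<gamma>0 u \<notin> range \<gamma>1"
      proof
        assume "\<gamma>0 u \<in> range \<gamma>1"
        then obtain i where i: "\<gamma>0 u = \<gamma>1 i" by blast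
        then obtain k where k: "sat k" "\<gamma>0 u = \<gamma>0 k" by (metis \<gamma>1_def s)
        then have "sat u" using sat_eq[OF k(2)] by (simp add: sat_def)
        then show False using u by simp
      qed
      have "range \<gamma>1 \<subset> range \<gamma>0" using sub notin by blast
      moreover have "finite (range \<gamma>0)" by (rule finite_imageI) simp
      ultimately have "card (range \<gamma>1) < card (range \<gamma>0)" using psubset_card_mono by blast
      from less.hyps[OF this g1] obtain gs L where
        gs: "gs 0 = \<gamma>1" "revision_path A c beta P eps gs L" "is_equilibrium A c beta P eps (gs L)" by blast
      let ?gs = "\<lambda>k. if k = 0 then \<gamma>0 else gs (k - 1)"
      show ?thesis
      proof (rule exI[of _ ?gs], rule exI[of _ "Suc L"], intro conjI)
        show "?gs 0 = \<gamma>0" by simp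
        show "is_equilibrium A c beta P eps (?gs (Suc L))" using gs(3) by simp
        show "revision_path A c beta P eps ?gs (Suc L)"
          unfolding revision_path_def
        proof (intro conjI allI impI)
          fix k assume k: "k \<le> Suc L"
          show "?gs k \<in> JP"
          proof (cases k)
            case 0 then show ?thesis using less.prems by simp
          next
            case (Suc k') then show ?thesis using gs(2) k by (simp add: revision_path_def)
          qed
        next
          fix k i assume k: "k < Suc L" and br: "best_response A c beta P eps i (?gs k) (?gs k i)"
          show "?gs (Suc k) i = ?gs k i"
          proof (cases k)
            case 0
            then have "sat i" using br by (simp add: sat_def)
            then show ?thesis using 0 gs(1) by (simp add: \<gamma>1_def)
          next
            case (Suc k')
            then have "k' < L" using k by simp
            then show ?thesis using gs(2) br Suc by (simp add: revision_path_def)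
          qed
        qed
      qed
    qed
  qed
qed

end
end

theorem theorem1:
  fixes A :: "'i::finite \<Rightarrow> 'a set"
    and c :: "'i \<Rightarrow> 'x::finite \<Rightarrow> ('i \<Rightarrow> 'a) \<Rightarrow> real"
    and beta :: "'i \<Rightarrow> real"
    and P :: "'x \<Rightarrow> ('i \<Rightarrow> 'a) \<Rightarrow> 'x \<Rightarrow> real"
    and eps :: real
  assumes "stochastic_game A c beta P"
    and "symmetric_game A c beta P"
    and "eps \<ge> 0"
  shows "\<forall>\<gamma>0\<in>joint_policies A. \<exists>\<gamma>s L. \<gamma>s 0 = \<gamma>0 \<and>
           revision_path A c beta P eps \<gamma>s L \<and> is_equilibrium A c beta P eps (\<gamma>s L)"
proof -
  interpret sgame A c beta P by unfold_locales (rule assms(1))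
  show ?thesis using path[OF assms(2) assms(3)] by blast
qed


end
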